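(* Let $p\ge1$, $\sigma,B,R>0$, $S_0:=\{x\in\mathbb{R}^p:\|x\|\le B\}$, $\mu$ a probability measure on $S_0$, and $G^*$ a probability measure on $\{\beta:\|\beta\|\le R\}$. Let $\mathcal{G}$ be the class of functions $x\mapsto\frac12\mathfrak{H}^2(f^G_x,f^{G^*}_x)$ on $S_0$, as $G$ ranges over all probability measures on $\{\beta\in\mathbb{R}^p:\|\beta\|\le R\}$, and let $T_{G^*}:=\int\big(\int\sqrt{f^{G^*}_x(y)}\,dy\big)^2d\mu(x)$ (assumed finite). Then for every $\epsilon>0$, $$N_{[]}(\epsilon,\mathcal{G},L_2(\mu))\le N\Big(\frac{\epsilon^2}{4T_{G^*}},\mathcal{M}_R,\|\cdot\|_\infty\Big).$$
   Context: $\phi$ is the standard normal density; $f^G_x(y):=\int\frac1\sigma\phi\big(\frac{y-x^\top\beta}{\sigma}\big)\,dG(\beta)$; $\mathfrak{H}^2(f,g)=\int(\sqrt f-\sqrt g)^2dy$. $\mathcal{M}_R:=\{(x,y)\mapsto f^G_x(y):G\text{ a probability measure supported on }\{\beta:\|\beta\|\le R\}\}$, and $\|\cdot\|_\infty$ is the pseudometric $(f^G,f^{G'})\mapsto\sup_{x\in S_0,y\in\mathbb{R}}|f^G_x(y)-f^{G'}_x(y)|$; $N(\eta,T,\mathfrak{d})$ is the smallest cardinality of an $\eta$-cover of $T$ under $\mathfrak{d}$. $N_{[]}(\epsilon,\mathcal{G},L_2(\mu))$ is the $\epsilon$-bracketing number: the smallest number of pairs of functions $(g^L_j,g^U_j)$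 with $\|g^U_j-g^L_j\|_{L_2(\mu)}\le\epsilon$ such that every $g\in\mathcal{G}$ satisfies $g^L_j\le g\le g^U_j$ for some $j$. *)

theory Defs
  imports "HOL-Probability.Probability"
begin

definition mix_dens :: "real \<Rightarrow> 'a::euclidean_space measure \<Rightarrow> 'a \<Rightarrow> real \<Rightarrow> real" where
  "mix_dens \<sigma> G x y = (\<integral>\<beta>. (1 / \<sigma>) * std_normal_density ((y - x \<bullet> \<beta>) / \<sigma>) \<partial>G)"

definition mixing_measure :: "real \<Rightarrow> 'a::euclidean_space measure \<Rightarrow> bool" where
  "mixing_measure R G \<longleftrightarrow> prob_space G \<and> sets G = sets (borel :: 'a measure) \<and>
     (AE \<beta> in G. norm \<beta> \<le> R)"

definition hellinger2 :: "(real \<Rightarrow> real) \<Rightarrow> (real \<Rightarrow> real) \<Rightarrow> real" where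
  "hellinger2 f g = (\<integral>y. (sqrt (f y) - sqrt (g y))\<^sup>2 \<partial>lborel)"

definition mix_class :: "real \<Rightarrow> real \<Rightarrow> ('a::euclidean_space \<Rightarrow> real \<Rightarrow> real) set" where
  "mix_class \<sigma> R = {mix_dens \<sigma> G | G. mixing_measure R G}"

definition sup_dist :: "'a set \<Rightarrow> ('a \<Rightarrow> real \<Rightarrow> real) \<Rightarrow> ('a \<Rightarrow> real \<Rightarrow> real) \<Rightarrow> real" where
  "sup_dist S f g = (SUP xy \<in> S \<times> UNIV. \<bar>f (fst xy) (snd xy) - g (fst xy) (snd xy)\<bar>)"

definition covering_number :: "('b \<Rightarrow> 'b \<Rightarrow> real) \<Rightarrow> 'b set \<Rightarrow> real \<Rightarrow> enat" where
  "covering_number d T \<eta> = (INF n \<in> {n. \<exists>c :: nat \<Rightarrow> 'b. (\<forall>j<n. c j \<in> T) \<and>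
      (\<forall>t\<in>T. \<exists>j<n. d t (c j) \<le> \<eta>)}. enat n)"

definition bracketing_number :: "'a measure \<Rightarrow> 'a set \<Rightarrow> real \<Rightarrow> ('a \<Rightarrow> real) set \<Rightarrow> enat" where
  "bracketing_number \<mu> S \<epsilon> \<G> = (INF n \<in> {n. \<exists>L U :: nat \<Rightarrow> 'a \<Rightarrow> real.
      (\<forall>j<n. L j \<in> borel_measurable \<mu> \<and> U j \<in> borel_measurable \<mu> \<and>
         sqrt (enn2real (\<integral>\<^sup>+x. ennreal ((U j x - L j x)\<^sup>2) \<partial>\<mu>)) \<le> \<epsilon> \<and>
         (\<integral>\<^sup>+x. ennreal ((U j x - L j x)\<^sup>2) \<partial>\<mu>) < \<infinity>) \<and>
      (\<forall>g\<in>\<G>. \<exists>j<n. \<forall>x\<in>S. L j x \<le> g x \<and> g x \<le> U j x)}. enat n)"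

end

theory Submission
  imports Defs
begin


lemma kern_eq:
  assumes "\<sigma> > 0"
  shows "(1 / \<sigma>) * std_normal_density ((y - m) / \<sigma>) = normal_density m \<sigma> y"
  using assms by (simp add: normal_density_def power_divide real_sqrt_mult field_simps)

lemma mix_dens_alt:
  assumes "\<sigma> > 0"
  shows "mix_dens \<sigma> G x y = (\<integral>\<beta>. normal_density (x \<bullet> \<beta>) \<sigma> y \<partial>G)"
  unfolding mix_dens_def using kern_eq[OF assms] by simp

lemma kern_meas:
  assumes "sets G = sets (borel :: 'a::euclidean_space measure)"
  shows "(\<lambda>(xy, \<beta>::'a). normal_density (fst xy \<bullet> \<beta>) \<sigma> (snd xy)) \<in> borel_measurable ((borel \<Otimes>\<^sub>M lborel) \<Otimes>\<^sub>M G)"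
proof -
  have "(\<lambda>(xy, \<beta>::'a). normal_density (fst xy \<bullet> \<beta>) \<sigma> (snd xy)) \<in> borel_measurable ((borel \<Otimes>\<^sub>M lborel) \<Otimes>\<^sub>M (borel::'a measure))"
    unfolding normal_density_def by measurable
  then show ?thesis
    by (metis (no_types) measurable_cong_sets sets_pair_measure_cong assms)
qed

lemma nd_bound: "\<sigma> > 0 \<Longrightarrow> normal_density m \<sigma> y \<le> 1 / sqrt (2 * pi * \<sigma>\<^sup>2)"
  unfolding normal_density_def by (auto intro!: divide_right_mono)

lemma mix_meas:
  assumes s: "\<sigma> > 0" and G: "mixing_measure R G"
  shows "(\<lambda>(x, y). mix_dens \<sigma> G x y) \<in> borel_measurable (borel \<Otimes>\<^sub>M lborel)"
proof -
  have ps: "prob_space G" and sG: "sets G = sets borel" using G by (auto simp: mixing_measure_def)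
  then interpret prob_space G by simp
  have "(\<lambda>xy. \<integral>\<beta>. normal_density (fst xy \<bullet> \<beta>) \<sigma> (snd xy) \<partial>G) \<in> borel_measurable (borel \<Otimes>\<^sub>M lborel)"
    using kern_meas[OF sG, of \<sigma>] by (intro borel_measurable_lebesgue_integral) simp
  then show ?thesis unfolding case_prod_beta' mix_dens_alt[OF s] by simp
qed

lemma mix_integrable_G:
  assumes s: "\<sigma> > 0" and G: "mixing_measure R G"
  shows "integrable G (\<lambda>\<beta>. normal_density (x \<bullet> \<beta>) \<sigma> y)"
proof -
  have ps: "prob_space G" and sG: "sets G = sets borel" using G by (auto simp: mixing_measure_def)
  then interpret prob_space G by simp
  have "(\<lambda>\<beta>::'a. normal_density (x \<bullet> \<beta>) \<sigma> y) \<in> borel_measurable borel"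
    unfolding normal_density_def by measurable
  then have m: "(\<lambda>\<beta>. normal_density (x \<bullet> \<beta>) \<sigma> y) \<in> borel_measurable G"
    by (subst measurable_cong_sets[OF sG refl])
  show ?thesis
    by (rule integrable_const_bound[where B="1 / sqrt (2 * pi * \<sigma>\<^sup>2)"]) (use nd_bound[OF s] m in auto)
qed

lemma mix_nonneg:
  assumes s: "\<sigma> > 0" and G: "mixing_measure R G"
  shows "0 \<le> mix_dens \<sigma> G x y"
  unfolding mix_dens_alt[OF s] by (rule integral_nonneg_AE) simp

lemma mix_bound:
  assumes s: "\<sigma> > 0" and G: "mixing_measure R G"
  shows "mix_dens \<sigma> G x y \<le> 1 / sqrt (2 * pi * \<sigma>\<^sup>2)"
proof -
  have ps: "prob_space G" using G by (auto simp: mixing_measure_def)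
  then interpret prob_space G by simp
  have "mix_dens \<sigma> G x y \<le> (\<integral>\<beta>. 1 / sqrt (2 * pi * \<sigma>\<^sup>2) \<partial>G)"
    unfolding mix_dens_alt[OF s]
    by (rule integral_mono) (use mix_integrable_G[OF s G] nd_bound[OF s] in auto)
  then show ?thesis by (simp add: prob_space)
qed

lemma mix_nn_integral:
  assumes s: "\<sigma> > 0" and G: "mixing_measure R G"
  shows "(\<integral>\<^sup>+y. ennreal (mix_dens \<sigma> G x y) \<partial>lborel) = 1"
proof -
  have ps: "prob_space G" and sG: "sets G = sets borel" using G by (auto simp: mixing_measure_def)
  then interpret prob_space G by simp
  interpret pair_sigma_finite G lborel
    by (simp add: pair_sigma_finite.intro lborel.sigma_finite_measure_axioms sigma_finite_measure_axioms)
  have m: "(\<lambda>(\<beta>, y). ennreal (normal_density (x \<bullet> \<beta>) \<sigma> y)) \<in> borel_measurable (G \<Otimes>\<^sub>M lborel)"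
  proof -
    have "(\<lambda>(\<beta>::'a, y). ennreal (normal_density (x \<bullet> \<beta>) \<sigma> y)) \<in> borel_measurable (borel \<Otimes>\<^sub>M lborel)"
      unfolding normal_density_def by measurable
    then show ?thesis
      by (metis (no_types) measurable_cong_sets sets_pair_measure_cong sG)
  qed
  have "(\<integral>\<^sup>+y. ennreal (mix_dens \<sigma> G x y) \<partial>lborel)
      = (\<integral>\<^sup>+y. (\<integral>\<^sup>+\<beta>. ennreal (normal_density (x \<bullet> \<beta>) \<sigma> y) \<partial>G) \<partial>lborel)"
    unfolding mix_dens_alt[OF s]
    by (intro nn_integral_cong nn_integral_eq_integral[symmetric] mix_integrable_G[OF s G]) auto
  also have "\<dots> = (\<integral>\<^sup>+\<beta>. (\<integral>\<^sup>+y. ennreal (normal_density (x \<bullet> \<beta>) \<sigma> y) \<partial>lborel) \<partial>G)"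
    using Fubini'[OF m] .
  also have "\<dots> = (\<integral>\<^sup>+\<beta>. 1 \<partial>G)"
    by (intro nn_integral_cong) (simp add: nn_integral_eq_integral s)
  also have "\<dots> = 1" by (simp add: emeasure_space_1)
  finally show ?thesis .
qed

lemma mix_integrable_y:
  assumes s: "\<sigma> > 0" and G: "mixing_measure R G"
  shows "integrable lborel (mix_dens \<sigma> G x)" and "(\<integral>y. mix_dens \<sigma> G x y \<partial>lborel) = 1"
proof -
  have m: "mix_dens \<sigma> G x \<in> borel_measurable lborel"
    using measurable_Pair2[OF mix_meas[OF s G], of x] by simp
  show "integrable lborel (mix_dens \<sigma> G x)"
    by (rule integrableI_nonneg) (use m mix_nonneg[OF s G] mix_nn_integral[OF s G] in auto)
  show "(\<integral>y. mix_dens \<sigma> G x y \<partial>lborel) = 1"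
    using integral_eq_nn_integral[OF m] mix_nonneg[OF s G] mix_nn_integral[OF s G] by simp
qed



lemma sqrt_diff_le: "0 \<le> a \<Longrightarrow> 0 \<le> b \<Longrightarrow> \<bar>sqrt a - sqrt b\<bar> \<le> sqrt \<bar>a - b\<bar>"
proof -
  assume a: "0 \<le> a" "0 \<le> b"
  have "(sqrt a - sqrt b)\<^sup>2 \<le> \<bar>a - b\<bar>"
  proof -
    have "(sqrt a - sqrt b)\<^sup>2 = \<bar>sqrt a - sqrt b\<bar> * \<bar>sqrt a - sqrt b\<bar>" by (simp add: power2_eq_square)
    also have "\<dots> \<le> \<bar>sqrt a - sqrt b\<bar> * (sqrt a + sqrt b)"
      using a real_sqrt_ge_zero[OF a(1)] real_sqrt_ge_zero[OF a(2)] by (intro mult_left_mono) (auto simp: abs_le_iff)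
    also have "\<dots> = \<bar>(sqrt a - sqrt b) * (sqrt a + sqrt b)\<bar>" using a by (simp add: abs_mult)
    also have "\<dots> = \<bar>a - b\<bar>" using a by (simp add: algebra_simps)
    finally show ?thesis .
  qed
  then show ?thesis using real_le_rsqrt by (metis abs_ge_zero real_sqrt_abs real_sqrt_le_mono)
qed

definition dens :: "(real \<Rightarrow> real) \<Rightarrow> bool" where
  "dens f \<longleftrightarrow> f \<in> borel_measurable lborel \<and> (\<forall>y. 0 \<le> f y) \<and> integrable lborel f \<and> (\<integral>y. f y \<partial>lborel) = 1"

lemma hell_eq:
  assumes f: "dens f" and h: "dens h"
  shows "integrable lborel (\<lambda>y. sqrt (f y * h y))"
    and "1/2 * hellinger2 f h = 1 - (\<integral>y. sqrt (f y * h y) \<partial>lborel)"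
    and "(\<integral>y. sqrt (f y * h y) \<partial>lborel) \<le> 1"
    and "0 \<le> (\<integral>y. sqrt (f y * h y) \<partial>lborel)"
proof -
  have fm[measurable]: "f \<in> borel_measurable lborel" and hm[measurable]: "h \<in> borel_measurable lborel"
    and fi: "integrable lborel f" and hi: "integrable lborel h"
    and f0: "\<And>y. 0 \<le> f y" and h0: "\<And>y. 0 \<le> h y"
    and f1: "(\<integral>y. f y \<partial>lborel) = 1" and h1: "(\<integral>y. h y \<partial>lborel) = 1"
    using f h by (auto simp: dens_def)
  have amgm: "\<And>y. sqrt (f y * h y) \<le> (f y + h y) / 2"
    using f0 h0 by (metis arith_geo_mean_sqrt)
  show si: "integrable lborel (\<lambda>y. sqrt (f y * h y))"
    by (rule Bochner_Integration.integrable_bound[of _ "\<lambda>y. (f y + h y) / 2"])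
       (use fi hi amgm f0 h0 in auto)
  have eq: "\<And>y. (sqrt (f y) - sqrt (h y))\<^sup>2 = f y + h y - 2 * sqrt (f y * h y)"
    using f0 h0 by (simp add: power2_diff real_sqrt_mult)
  have "hellinger2 f h = (\<integral>y. f y + h y - 2 * sqrt (f y * h y) \<partial>lborel)"
    unfolding hellinger2_def eq ..
  also have "\<dots> = 2 - 2 * (\<integral>y. sqrt (f y * h y) \<partial>lborel)"
    using fi hi si f1 h1 by simp
  finally show "1/2 * hellinger2 f h = 1 - (\<integral>y. sqrt (f y * h y) \<partial>lborel)" by simp
  have "(\<integral>y. sqrt (f y * h y) \<partial>lborel) \<le> (\<integral>y. (f y + h y) / 2 \<partial>lborel)"
    by (rule integral_mono) (use si fi hi amgm in auto)
  also have "\<dots> = 1" using fi hi f1 h1 by simp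
  finally show "(\<integral>y. sqrt (f y * h y) \<partial>lborel) \<le> 1" .
  show "0 \<le> (\<integral>y. sqrt (f y * h y) \<partial>lborel)" by (intro integral_nonneg_AE AE_I2) (simp add: f0 h0)
qed

lemma hell_diff:
  assumes f: "dens f" and f': "dens f'" and h: "dens h" and eta: "\<And>y. \<bar>f y - f' y\<bar> \<le> \<eta>"
    and A: "(\<integral>\<^sup>+y. ennreal (sqrt (h y)) \<partial>lborel) \<noteq> \<infinity>"
  shows "\<bar>1/2 * hellinger2 f h - 1/2 * hellinger2 f' h\<bar>
          \<le> sqrt \<eta> * enn2real (\<integral>\<^sup>+y. ennreal (sqrt (h y)) \<partial>lborel)"
proof -
  have fm[measurable]: "f \<in> borel_measurable lborel" and hm[measurable]: "h \<in> borel_measurable lborel"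
    and f'm[measurable]: "f' \<in> borel_measurable lborel"
    and f0: "\<And>y. 0 \<le> f y" and h0: "\<And>y. 0 \<le> h y" and f'0: "\<And>y. 0 \<le> f' y"
    using f h f' by (auto simp: dens_def)
  have sh: "integrable lborel (\<lambda>y. sqrt (h y))"
    by (rule integrableI_nonneg) (use A h0 in \<open>auto simp: top.not_eq_extremum\<close>)
  have Aeq: "enn2real (\<integral>\<^sup>+y. ennreal (sqrt (h y)) \<partial>lborel) = (\<integral>y. sqrt (h y) \<partial>lborel)"
    by (rule integral_eq_nn_integral[symmetric]) (auto simp: h0)
  note e1 = hell_eq[OF f h] and e2 = hell_eq[OF f' h]
  have "\<bar>1/2 * hellinger2 f h - 1/2 * hellinger2 f' h\<bar>
      = \<bar>\<integral>y. sqrt (f y * h y) - sqrt (f' y * h y) \<partial>lborel\<bar>"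
    unfolding e1(2) e2(2) Bochner_Integration.integral_diff[OF e1(1) e2(1)] by (simp add: abs_minus_commute)
  also have "\<dots> \<le> (\<integral>y. \<bar>sqrt (f y * h y) - sqrt (f' y * h y)\<bar> \<partial>lborel)"
    by (rule integral_abs_bound)
  also have "\<dots> \<le> (\<integral>y. sqrt \<eta> * sqrt (h y) \<partial>lborel)"
  proof (rule integral_mono)
    show "integrable lborel (\<lambda>y. \<bar>sqrt (f y * h y) - sqrt (f' y * h y)\<bar>)"
      using e1(1) e2(1) by auto
    show "integrable lborel (\<lambda>y. sqrt \<eta> * sqrt (h y))" using sh by auto
    fix y
    have "\<bar>sqrt (f y * h y) - sqrt (f' y * h y)\<bar> = \<bar>sqrt (f y) - sqrt (f' y)\<bar> * sqrt (h y)"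
      using h0[of y] by (simp add: real_sqrt_mult abs_mult flip: left_diff_distrib)
    also have "\<dots> \<le> sqrt \<bar>f y - f' y\<bar> * sqrt (h y)"
      by (intro mult_right_mono sqrt_diff_le f0 f'0) (simp add: h0)
    also have "\<dots> \<le> sqrt \<eta> * sqrt (h y)"
      by (intro mult_right_mono real_sqrt_le_mono eta) (simp add: h0)
    finally show "\<bar>sqrt (f y * h y) - sqrt (f' y * h y)\<bar> \<le> sqrt \<eta> * sqrt (h y)" .
  qed
  also have "\<dots> = sqrt \<eta> * enn2real (\<integral>\<^sup>+y. ennreal (sqrt (h y)) \<partial>lborel)"
    using Aeq by simp
  finally show ?thesis .
qed


lemma mix_dens_dens:
  assumes s: "\<sigma> > 0" and G: "mixing_measure R G"
  shows "dens (mix_dens \<sigma> G x)"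
  unfolding dens_def
  using measurable_Pair2[OF mix_meas[OF s G], of x] mix_nonneg[OF s G] mix_integrable_y[OF s G]
  by simp

lemma mix_meas2:
  assumes s: "\<sigma> > 0" and G: "mixing_measure R G"
  shows "(\<lambda>p. mix_dens \<sigma> G (fst p) (snd p)) \<in> borel_measurable (borel \<Otimes>\<^sub>M lborel)"
  using mix_meas[OF s G] by (simp add: case_prod_beta')

theorem mainTheorem10:
  fixes \<sigma> B R \<epsilon> :: real and \<mu> Gstar :: "'a::euclidean_space measure"
  assumes "\<sigma> > 0" and "B > 0" and "R > 0"
    and "prob_space \<mu>" and "sets \<mu> = sets (borel :: 'a measure)"
    and "AE x in \<mu>. norm x \<le> B"
    and "mixing_measure R Gstar"
    and "(\<integral>\<^sup>+x. (\<integral>\<^sup>+y. ennreal (sqrt (mix_dens \<sigma> Gstar x y)) \<partial>lborel)\<^sup>2 \<partial>\<mu>) < \<infinity>"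
    and "\<epsilon> > 0"
  shows "bracketing_number \<mu> {x. norm x \<le> B} \<epsilon>
           {(\<lambda>x. 1/2 * hellinger2 (mix_dens \<sigma> G x) (mix_dens \<sigma> Gstar x)) | G. mixing_measure R G}
         \<le> covering_number (sup_dist {x. norm x \<le> B}) (mix_class \<sigma> R :: ('a \<Rightarrow> real \<Rightarrow> real) set)
             (\<epsilon>\<^sup>2 / (4 * enn2real (\<integral>\<^sup>+x. (\<integral>\<^sup>+y. ennreal (sqrt (mix_dens \<sigma> Gstar x y)) \<partial>lborel)\<^sup>2 \<partial>\<mu>)))"
proof -
  note s = assms(1) and Gs = assms(7) and sm = assms(5)
  define S :: "'a set" where "S = {x. norm x \<le> B}"
  define A where "A x = (\<integral>\<^sup>+y. ennreal (sqrt (mix_dens \<sigma> Gstar x y)) \<partial>lborel)" for x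
  define Tn where "Tn = (\<integral>\<^sup>+x. (A x)\<^sup>2 \<partial>\<mu>)"
  define T where "T = enn2real Tn"
  define \<eta> where "\<eta> = \<epsilon>\<^sup>2 / (4 * T)"
  define K where "K = 1 / sqrt (2 * pi * \<sigma>\<^sup>2)"
  have Tfin: "Tn < \<infinity>" using assms(8) unfolding Tn_def A_def .
  have T0: "0 \<le> T" unfolding T_def by simp
  have eta0: "0 \<le> \<eta>" unfolding \<eta>_def using T0 by simp
  have Am[measurable]: "A \<in> borel_measurable borel"
    unfolding A_def
    using mix_meas2[OF s Gs] by measurable
  have Am': "A \<in> borel_measurable \<mu>" by (subst measurable_cong_sets[OF sm refl]) (rule Am)
  have AEfin: "AE x in \<mu>. A x \<noteq> \<infinity>"
  proof -
    have "AE x in \<mu>. (A x)\<^sup>2 \<noteq> \<infinity>"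
      by (rule nn_integral_PInf_AE) (use Am' Tfin in \<open>auto simp: Tn_def\<close>)
    then show ?thesis by (auto simp: power_eq_top_ennreal)
  qed
  define w where "w x = (if A x = \<infinity> then 1 else sqrt \<eta> * enn2real (A x))" for x
  have wm: "w \<in> borel_measurable borel" unfolding w_def by measurable
  have w0: "0 \<le> w x" for x unfolding w_def using eta0 by simp
  show ?thesis
    unfolding bracketing_number_def covering_number_def S_def[symmetric] \<eta>_def[symmetric]
      T_def[symmetric] Tn_def[symmetric] A_def[symmetric]
  proof (rule INF_mono)
    fix n assume "n \<in> {n. \<exists>c :: nat \<Rightarrow> 'a \<Rightarrow> real \<Rightarrow> real. (\<forall>j<n. c j \<in> mix_class \<sigma> R) \<and>
      (\<forall>t\<in>mix_class \<sigma> R. \<exists>j<n. sup_dist S t (c j) \<le> \<eta>)}"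
    then obtain c :: "nat \<Rightarrow> 'a \<Rightarrow> real \<Rightarrow> real" where cT: "\<forall>j<n. c j \<in> mix_class \<sigma> R"
      and cov: "\<forall>t\<in>mix_class \<sigma> R. \<exists>j<n. sup_dist S t (c j) \<le> \<eta>" by blast
    define Gc where "Gc j = (SOME G. mixing_measure R G \<and> c j = mix_dens \<sigma> G)" for j
    have Gc: "mixing_measure R (Gc j) \<and> c j = mix_dens \<sigma> (Gc j)" if "j < n" for j
    proof -
      have "\<exists>G. mixing_measure R G \<and> c j = mix_dens \<sigma> G"
        using cT that unfolding mix_class_def by auto
      then show ?thesis unfolding Gc_def by (rule someI_ex)
    qed
    define gj where "gj j x = 1/2 * hellinger2 (c j x) (mix_dens \<sigma> Gstar x)" for j x
    define L where "L j x = gj j x - w x" for j x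
    define U where "U j x = gj j x + w x" for j x
    have gjm: "gj j \<in> borel_measurable borel" if "j < n" for j
    proof -
      have cj: "c j = mix_dens \<sigma> (Gc j)" and Gj: "mixing_measure R (Gc j)" using Gc[OF that] by auto
      note [measurable] = mix_meas2[OF s Gj] mix_meas2[OF s Gs]
      show ?thesis unfolding gj_def hellinger2_def cj by measurable
    qed
    have width: "(\<integral>\<^sup>+x. ennreal ((U j x - L j x)\<^sup>2) \<partial>\<mu>) \<le> ennreal (\<epsilon>\<^sup>2)" for j
    proof -
      have "(\<integral>\<^sup>+x. ennreal ((U j x - L j x)\<^sup>2) \<partial>\<mu>) \<le> (\<integral>\<^sup>+x. ennreal (4 * \<eta>) * (A x)\<^sup>2 \<partial>\<mu>)"
      proof (rule nn_integral_mono_AE)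
        show "AE x in \<mu>. ennreal ((U j x - L j x)\<^sup>2) \<le> ennreal (4 * \<eta>) * (A x)\<^sup>2"
          using AEfin
        proof eventually_elim
          case (elim x)
          then have Ax: "A x = ennreal (enn2real (A x))" by (simp add: ennreal_enn2real_if)
          have "(U j x - L j x)\<^sup>2 = 4 * \<eta> * (enn2real (A x))\<^sup>2"
            using elim eta0 unfolding U_def L_def w_def by (simp add: power2_eq_square)
          then have "ennreal ((U j x - L j x)\<^sup>2) = ennreal (4 * \<eta>) * (ennreal (enn2real (A x)))\<^sup>2"
            using eta0 by (simp add: ennreal_mult ennreal_power)
          then show ?case using Ax by simp
        qed
      qed
      also have "\<dots> = ennreal (4 * \<eta>) * Tn"
        unfolding Tn_def by (rule nn_integral_cmult) (use Am' in simp)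
      also have "\<dots> = ennreal (4 * \<eta> * T)"
        using Tfin T0 eta0 unfolding T_def by (simp add: ennreal_mult ennreal_enn2real_if)
      also have "\<dots> \<le> ennreal (\<epsilon>\<^sup>2)"
        using T0 by (cases "T = 0") (auto simp: \<eta>_def)
      finally show ?thesis .
    qed
    have P1: "\<forall>j<n. L j \<in> borel_measurable \<mu> \<and> U j \<in> borel_measurable \<mu> \<and>
         sqrt (enn2real (\<integral>\<^sup>+x. ennreal ((U j x - L j x)\<^sup>2) \<partial>\<mu>)) \<le> \<epsilon> \<and>
         (\<integral>\<^sup>+x. ennreal ((U j x - L j x)\<^sup>2) \<partial>\<mu>) < \<infinity>"
    proof (intro allI impI conjI)
      fix j assume j: "j < n"
      have "L j \<in> borel_measurable borel" unfolding L_def using gjm[OF j] wm by measurable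
      then show "L j \<in> borel_measurable \<mu>" by (subst measurable_cong_sets[OF sm refl])
      have "U j \<in> borel_measurable borel" unfolding U_def using gjm[OF j] wm by measurable
      then show "U j \<in> borel_measurable \<mu>" by (subst measurable_cong_sets[OF sm refl])
      show "(\<integral>\<^sup>+x. ennreal ((U j x - L j x)\<^sup>2) \<partial>\<mu>) < \<infinity>"
        using width[of j] by (simp add: le_less_trans)
      have "enn2real (\<integral>\<^sup>+x. ennreal ((U j x - L j x)\<^sup>2) \<partial>\<mu>) \<le> \<epsilon>\<^sup>2"
        by (rule enn2real_leI) (use width[of j] in auto)
      then have "sqrt (enn2real (\<integral>\<^sup>+x. ennreal ((U j x - L j x)\<^sup>2) \<partial>\<mu>)) \<le> sqrt (\<epsilon>\<^sup>2)"
        by (rule real_sqrt_le_mono)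
      then show "sqrt (enn2real (\<integral>\<^sup>+x. ennreal ((U j x - L j x)\<^sup>2) \<partial>\<mu>)) \<le> \<epsilon>"
        using assms(9) by simp
    qed
    have P2: "\<forall>g\<in>{(\<lambda>x. 1/2 * hellinger2 (mix_dens \<sigma> G x) (mix_dens \<sigma> Gstar x)) | G. mixing_measure R G}.
         \<exists>j<n. \<forall>x\<in>S. L j x \<le> g x \<and> g x \<le> U j x"
    proof
      fix g assume "g \<in> {(\<lambda>x. 1/2 * hellinger2 (mix_dens \<sigma> G x) (mix_dens \<sigma> Gstar x)) | G. mixing_measure R G}"
      then obtain G where G: "mixing_measure R G"
        and g: "g = (\<lambda>x. 1/2 * hellinger2 (mix_dens \<sigma> G x) (mix_dens \<sigma> Gstar x))" by blast
      have "mix_dens \<sigma> G \<in> mix_class \<sigma> R" using G unfolding mix_class_def by auto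
      then obtain j where j: "j < n" and d: "sup_dist S (mix_dens \<sigma> G) (c j) \<le> \<eta>" using cov by blast
      have cj: "c j = mix_dens \<sigma> (Gc j)" and Gj: "mixing_measure R (Gc j)" using Gc[OF j] by auto
      have close: "\<bar>g x - gj j x\<bar> \<le> w x" if x: "x \<in> S" for x
      proof (cases "A x = \<infinity>")
        case True
        have "\<bar>g x - gj j x\<bar> \<le> 1"
          using hell_eq[OF mix_dens_dens[OF s G, of x] mix_dens_dens[OF s Gs, of x]]
            hell_eq[OF mix_dens_dens[OF s Gj, of x] mix_dens_dens[OF s Gs, of x]]
          unfolding g gj_def cj by (smt (verit))
        then show ?thesis using True unfolding w_def by simp
      next
        case False
        have pt: "\<bar>mix_dens \<sigma> G x y - mix_dens \<sigma> (Gc j) x y\<bar> \<le> \<eta>" for y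
        proof -
          let ?F = "\<lambda>xy. \<bar>mix_dens \<sigma> G (fst xy) (snd xy) - c j (fst xy) (snd xy)\<bar>"
          have bdd: "bdd_above (?F ` (S \<times> UNIV))"
          proof (rule bdd_aboveI2)
            fix xy
            show "?F xy \<le> K"
              using mix_nonneg[OF s G] mix_bound[OF s G] mix_nonneg[OF s Gj] mix_bound[OF s Gj]
              unfolding cj K_def by (smt (verit))
          qed
          have "?F (x, y) \<le> (SUP xy \<in> S \<times> UNIV. ?F xy)"
            by (rule cSUP_upper) (use x bdd in auto)
          also have "\<dots> \<le> \<eta>" using d unfolding sup_dist_def .
          finally show ?thesis unfolding cj by simp
        qed
        have "\<bar>g x - gj j x\<bar> \<le> sqrt \<eta> * enn2real (A x)"
          unfolding g gj_def cj A_def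
          by (rule hell_diff[OF mix_dens_dens[OF s G, of x] mix_dens_dens[OF s Gj, of x] mix_dens_dens[OF s Gs, of x] pt])
             (use False in \<open>simp add: A_def\<close>)
        then show ?thesis using False unfolding w_def by simp
      qed
      show "\<exists>j<n. \<forall>x\<in>S. L j x \<le> g x \<and> g x \<le> U j x"
        using j close unfolding L_def U_def by (intro exI[of _ j]) (force simp: abs_le_iff)
    qed
    show "\<exists>m\<in>{n. \<exists>L U :: nat \<Rightarrow> 'a \<Rightarrow> real.
      (\<forall>j<n. L j \<in> borel_measurable \<mu> \<and> U j \<in> borel_measurable \<mu> \<and>
         sqrt (enn2real (\<integral>\<^sup>+x. ennreal ((U j x - L j x)\<^sup>2) \<partial>\<mu>)) \<le> \<epsilon> \<and>
         (\<integral>\<^sup>+x. ennreal ((U j x - L j x)\<^sup>2) \<partial>\<mu>) < \<infinity>) \<and>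
      (\<forall>g\<in>{(\<lambda>x. 1/2 * hellinger2 (mix_dens \<sigma> G x) (mix_dens \<sigma> Gstar x)) | G. mixing_measure R G}.
         \<exists>j<n. \<forall>x\<in>S. L j x \<le> g x \<and> g x \<le> U j x)}. enat m \<le> enat n"
      by (intro bexI[of _ n] CollectI exI[of _ L] exI[of _ U]) (use P1 P2 in auto)
  qed
qed

end
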